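(* Let $c\in\mathbb{N}$, let $\delta>1/c$, and let $\mathrm{ALG}$ be a deterministic algorithm for the Halld\'orsson–Szegedy guessing game such that on inputs where $n=k^c$ the cost of $\mathrm{ALG}$ is at most $O(n^{1-\delta})$. Then $\mathrm{ALG}$ must read at least $b=\Omega(n\log n)$ bits of advice.
   Context: The Halld\'orsson–Szegedy guessing game (HSGG) is the following minimization problem. First integers $k\leq n$ with $k$ even are revealed. Then for $i=1,\dots,n$: a set $A_i\subseteq[k]$ of size $k/2$ (available characters) is revealed; the algorithm answers $y_i\in[n]$ subject to: for every $t<i$ with $y_t=y_i$, $x_t\in A_i$; then the correct character $x_i\in A_i$ is revealed. The cost of the output $y_1\cdots y_n$ is $|\{y_1,\dots,y_n\}|$. Advice is read from an infinite tape prepared by an oracle knowing the whole input. *)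

theory Defs
  imports Complex_Main
begin

type_synonym tape = "nat \<Rightarrow> bool"

text \<open>Given the advice tape,
  k, n, the revealed sets A_1..A_i (a list of length i) and the revealed characters
  x_1..x_{i-1} (a list of length i-1), it answers y_i. Onlineness is enforced by the type.\<close>
type_synonym hsgg_alg = "tape \<Rightarrow> nat \<Rightarrow> nat \<Rightarrow> nat set list \<Rightarrow> nat list \<Rightarrow> nat"

text \<open>An oracle prepares the tape knowing the whole input (k, n, As, xs).\<close>
type_synonym hsgg_oracle = "nat \<Rightarrow> nat \<Rightarrow> nat set list \<Rightarrow> nat list \<Rightarrow> tape"

definition hsgg_input :: "nat \<Rightarrow> nat \<Rightarrow> nat set list \<Rightarrow> nat list \<Rightarrow> bool" where
  "hsgg_input k n As xs \<longleftrightarrow> even k \<and> k \<le> n \<and> length As = n \<and> length xs = n \<and>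
     (\<forall>i<n. As ! i \<subseteq> {1..k} \<and> card (As ! i) = k div 2 \<and> xs ! i \<in> As ! i)"

definition hsgg_run :: "hsgg_alg \<Rightarrow> tape \<Rightarrow> nat \<Rightarrow> nat \<Rightarrow> nat set list \<Rightarrow> nat list \<Rightarrow> nat list" where
  "hsgg_run ALG \<phi> k n As xs = map (\<lambda>i. ALG \<phi> k n (take (Suc i) As) (take i xs)) [0..<n]"

definition hsgg_valid_output :: "nat \<Rightarrow> nat set list \<Rightarrow> nat list \<Rightarrow> nat list \<Rightarrow> bool" where
  "hsgg_valid_output n As xs ys \<longleftrightarrow> length ys = n \<and>
     (\<forall>i<n. ys ! i \<in> {1..n} \<and> (\<forall>t<i. ys ! t = ys ! i \<longrightarrow> xs ! t \<in> As ! i))"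

definition hsgg_cost :: "nat list \<Rightarrow> nat" where
  "hsgg_cost ys = card (set ys)"

text \<open>The run of ALG on the input with tape \<phi> only depends on (i.e. reads at most)
  the first b bits of \<phi>: every tape agreeing with \<phi> on positions < b yields the same run.
  (The number of bits actually read is at least the least such b.)\<close>
definition hsgg_determined_by :: "hsgg_alg \<Rightarrow> tape \<Rightarrow> nat \<Rightarrow> nat \<Rightarrow> nat \<Rightarrow> nat set list \<Rightarrow> nat list \<Rightarrow> bool" where
  "hsgg_determined_by ALG \<phi> b k n As xs \<longleftrightarrow>
     (\<forall>\<psi>. (\<forall>j<b. \<psi> j = \<phi> j) \<longrightarrow> hsgg_run ALG \<psi> k n As xs = hsgg_run ALG \<phi> k n As xs)"

end

theory Submission
  imports Defs "HOL-Real_Asymp.Real_Asymp"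
begin


definition ysOf :: "(nat set list \<Rightarrow> nat list \<Rightarrow> nat) \<Rightarrow> (nat set \<times> nat) list \<Rightarrow> nat list" where
  "ysOf g ps = map (\<lambda>i. g (map fst (take (Suc i) ps)) (map snd (take i ps))) [0..<length ps]"

definition okp :: "(nat set list \<Rightarrow> nat list \<Rightarrow> nat) \<Rightarrow> nat \<Rightarrow> (nat set \<times> nat) list \<Rightarrow> bool" where
  "okp g m ps \<longleftrightarrow> (\<forall>i<length ps. \<forall>t<i. ysOf g ps ! t = ysOf g ps ! i \<longrightarrow> snd (ps!t) \<in> fst (ps!i))
      \<and> card (set (ysOf g ps)) \<le> m"

definition Phi :: "(nat set list \<Rightarrow> nat list \<Rightarrow> nat) \<Rightarrow> (nat set \<times> nat) list \<Rightarrow> nat" where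
  "Phi g ps = card (set (zip (ysOf g ps) (map snd ps)))"

definition QQ :: "nat \<Rightarrow> nat \<Rightarrow> nat set set" where
  "QQ k h = {A. A \<subseteq> {1..k} \<and> card A = h}"

definition PP :: "nat \<Rightarrow> nat \<Rightarrow> (nat set \<times> nat) set" where
  "PP k h = {(A,x). A \<subseteq> {1..k} \<and> card A = h \<and> x \<in> A}"

lemma length_ysOf[simp]: "length (ysOf g ps) = length ps" by (simp add: ysOf_def)

lemma nth_ysOf: "i < length ps \<Longrightarrow> ysOf g ps ! i = g (map fst (take (Suc i) ps)) (map snd (take i ps))"
  by (simp add: ysOf_def)

lemma ysOf_snoc: "ysOf g (ps @ [p]) = ysOf g ps @ [g (map fst ps @ [fst p]) (map snd ps)]"
  by (rule nth_equalityI) (auto simp: nth_ysOf nth_append less_Suc_eq)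

lemma ysOf_take: "ysOf g (take j ps) = take j (ysOf g ps)"
  by (rule nth_equalityI) (auto simp: nth_ysOf min_def split: if_splits)

lemma okp_Nil[simp]: "okp g m []" by (simp add: okp_def ysOf_def)

lemma Phi_Nil[simp]: "Phi g [] = 0" by (simp add: Phi_def ysOf_def)

lemma okp_prefix: assumes "okp g m (ps @ qs)" shows "okp g m ps"
proof -
  have e: "ysOf g ps = take (length ps) (ysOf g (ps @ qs))"
    using ysOf_take[of g "length ps" "ps @ qs"] by simp
  have "card (set (ysOf g ps)) \<le> card (set (ysOf g (ps @ qs)))"
    unfolding e by (rule card_mono) (auto dest: in_set_takeD)
  moreover have "\<forall>i<length ps. \<forall>t<i. ysOf g ps ! t = ysOf g ps ! i \<longrightarrow> snd (ps!t) \<in> fst (ps!i)"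
  proof (intro allI impI)
    fix i t assume "i < length ps" "t < i" "ysOf g ps ! t = ysOf g ps ! i"
    then have "ysOf g (ps @ qs) ! t = ysOf g (ps @ qs) ! i" "i < length (ps @ qs)"
      unfolding e by auto
    then have "snd ((ps @ qs)!t) \<in> fst ((ps @ qs)!i)"
      using assms \<open>t < i\<close> unfolding okp_def by blast
    then show "snd (ps!t) \<in> fst (ps!i)"
      using \<open>t < i\<close> \<open>i < length ps\<close> by (simp add: nth_append)
  qed
  ultimately show ?thesis using assms unfolding okp_def by auto
qed

lemma Phi_snoc:
  "Phi g (ps @ [p]) = (if (g (map fst ps @ [fst p]) (map snd ps), snd p) \<in> set (zip (ysOf g ps) (map snd ps))
      then Phi g ps else Suc (Phi g ps))"
  by (simp add: Phi_def ysOf_snoc insert_absorb)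

lemma Phi_le:
  assumes "okp g m ps" "set ps \<subseteq> PP k h"
  shows "Phi g ps \<le> m * k"
proof -
  have "set (zip (ysOf g ps) (map snd ps)) \<subseteq> set (ysOf g ps) \<times> {1..k}"
  proof
    fix z assume "z \<in> set (zip (ysOf g ps) (map snd ps))"
    then obtain i where i: "i < length ps" "z = (ysOf g ps ! i, snd (ps ! i))"
      by (auto simp: set_zip)
    have "ps ! i \<in> PP k h" using assms(2) i(1) by auto
    then show "z \<in> set (ysOf g ps) \<times> {1..k}" using i by (auto simp: PP_def)
  qed
  then have "Phi g ps \<le> card (set (ysOf g ps) \<times> {1..k})"
    unfolding Phi_def by (intro card_mono) auto
  also have "\<dots> = card (set (ysOf g ps)) * k" by (simp add: card_cartesian_product)
  also have "\<dots> \<le> m * k" using assms(1) by (simp add: okp_def)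
  finally show ?thesis .
qed


lemma binom_half:
  "s \<le> h \<Longrightarrow> 2*h \<le> K \<Longrightarrow> 2^s * ((K - s) choose (h - s)) \<le> K choose h"
proof (induction s arbitrary: K h)
  case 0 then show ?case by simp
next
  case (Suc s)
  have h1: "h \<ge> 1" using Suc.prems by simp
  have IH: "2^s * ((K - 1 - s) choose (h - 1 - s)) \<le> (K - 1) choose (h - 1)"
  proof -
    have "s \<le> h - 1" "2*(h-1) \<le> K - 1" using Suc.prems by auto
    then show ?thesis by (rule Suc.IH)
  qed
  have e1: "h * (K choose h) = K * ((K - 1) choose (h - 1))"
    using times_binomial_minus1_eq[of h K] h1 by linarith
  have e2: "2 * h * ((K - 1) choose (h - 1)) \<le> K * ((K - 1) choose (h - 1))"
    using Suc.prems by (intro mult_le_mono1) simp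
  have "h * (2 * ((K - 1) choose (h - 1))) \<le> h * (K choose h)"
    using e1 e2 by (simp only: mult.assoc[symmetric] mult.commute[of h 2])
  then have c: "2 * ((K - 1) choose (h - 1)) \<le> K choose h"
    using h1 by (simp only: mult_le_cancel1)
  have "K - Suc s = K - 1 - s" "h - Suc s = h - 1 - s" by auto
  then have "2 * (2^s * ((K - Suc s) choose (h - Suc s))) \<le> 2 * ((K - 1) choose (h - 1))"
    using IH by (simp only:)
  then show ?case using c by simp
qed



lemma card_supsets:
  assumes S: "S \<subseteq> {1..k}" and hk: "2*h \<le> k"
  shows "card {A. A \<subseteq> {1..k} \<and> card A = h \<and> S \<subseteq> A} * 2^card S \<le> card (QQ k h)"
proof (cases "card S \<le> h")
  case False
  have E: "{A. A \<subseteq> {1..k} \<and> card A = h \<and> S \<subseteq> A} = {}"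
  proof (intro equalityI subsetI)
    fix A assume "A \<in> {A. A \<subseteq> {1..k} \<and> card A = h \<and> S \<subseteq> A}"
    then have "card S \<le> card A" using finite_subset[of A "{1..k}"] by (auto intro: card_mono)
    then show "A \<in> {}" using False \<open>A \<in> _\<close> by auto
  qed auto
  show ?thesis unfolding E by simp
next
  case True
  have finS: "finite S" using S finite_subset by blast
  let ?L = "{A. A \<subseteq> {1..k} \<and> card A = h \<and> S \<subseteq> A}"
  let ?R = "{B. B \<subseteq> {1..k} - S \<and> card B = h - card S}"
  have inj: "inj_on (\<lambda>A. A - S) ?L"
    by (rule inj_onI) blast
  have img: "(\<lambda>A. A - S) ` ?L = ?R"
  proof (intro equalityI subsetI)
    fix B assume "B \<in> (\<lambda>A. A - S) ` ?L"
    then obtain A where A: "A \<in> ?L" "B = A - S" by blast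
    have "finite A" using A(1) finite_subset[of A "{1..k}"] by auto
    then show "B \<in> ?R" using A finite_subset[OF _ \<open>finite A\<close>, of S] by (auto simp: card_Diff_subset)
  next
    fix B assume B: "B \<in> ?R"
    have fB: "finite B" using B finite_subset[of B "{1..k}"] by auto
    have "B \<inter> S = {}" using B by auto
    then have "card (B \<union> S) = h" using B True fB finS by (simp add: card_Un_disjoint)
    moreover have "B = (B \<union> S) - S" using B by auto
    ultimately show "B \<in> (\<lambda>A. A - S) ` ?L" using B S by blast
  qed
  have "card ?L = card ?R" using card_image[OF inj] img by simp
  also have "\<dots> = (k - card S) choose (h - card S)"
    using n_subsets[of "{1..k} - S" "h - card S"] S finS by (simp add: card_Diff_subset)
  finally have "card ?L * 2^card S = 2^card S * ((k - card S) choose (h - card S))" by simp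
  also have "\<dots> \<le> k choose h" using binom_half[OF True hk] .
  also have "\<dots> = card (QQ k h)" using n_subsets[of "{1..k}" h] by (simp add: QQ_def)
  finally show ?thesis .
qed


lemma finite_QQ: "finite (QQ k h)"
  by (rule finite_subset[of _ "Pow {1..k}"]) (auto simp: QQ_def)

lemma finite_PP: "finite (PP k h)"
  by (rule finite_subset[of _ "Pow {1..k} \<times> {1..k}"]) (auto simp: PP_def)

lemma classO:
  assumes ok: "okp g m ps" and sP: "set ps \<subseteq> PP k h" and hk: "2*h \<le> k"
  shows "real (card {p \<in> PP k h. okp g m (ps@[p]) \<and> Phi g (ps@[p]) = Phi g ps})
          \<le> real (card (QQ k h)) * (real d + real m * real h / 2^d)"
proof -
  define ys where "ys = ysOf g ps"
  define Sg where "Sg y = {snd (ps!t) | t. t < length ps \<and> ys!t = y}" for y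
  define yA where "yA A = g (map fst ps @ [A]) (map snd ps)" for A
  define O1 where "O1 = Sigma (QQ k h) (\<lambda>A. if card (Sg (yA A)) < d then Sg (yA A) else {})"
  define Y where "Y = {y \<in> set ys. d \<le> card (Sg y)}"
  define O2 where "O2 = (\<Union>y\<in>Y. Sigma {A \<in> QQ k h. Sg y \<subseteq> A} (\<lambda>A. A))"
  have Sg_sub: "Sg y \<subseteq> {1..k}" for y
  proof
    fix z assume "z \<in> Sg y"
    then obtain t where t: "t < length ps" "z = snd (ps!t)" by (auto simp: Sg_def)
    have "ps!t \<in> PP k h" using t sP nth_mem by blast
    then show "z \<in> {1..k}" using t by (auto simp: PP_def)
  qed
  have finSg: "finite (Sg y)" for y using Sg_sub finite_subset by blast
  have sub: "{p \<in> PP k h. okp g m (ps@[p]) \<and> Phi g (ps@[p]) = Phi g ps} \<subseteq> O1 \<union> O2"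
  proof
    fix p assume p: "p \<in> {p \<in> PP k h. okp g m (ps@[p]) \<and> Phi g (ps@[p]) = Phi g ps}"
    obtain A x where pAx: "p = (A, x)" by (cases p)
    have AQ: "A \<in> QQ k h" "x \<in> A" using p pAx by (auto simp: PP_def QQ_def)
    have "(yA A, x) \<in> set (zip ys (map snd ps))"
      using p pAx Phi_snoc[of g ps p] by (auto simp: yA_def ys_def split: if_splits)
    then obtain t where t: "t < length ps" "ys!t = yA A" "snd (ps!t) = x"
      by (auto simp: set_zip ys_def)
    have xS: "x \<in> Sg (yA A)" using t unfolding Sg_def by blast
    have yin: "yA A \<in> set ys"
    proof -
      have "ys!t \<in> set ys" using t(1) by (simp add: ys_def)
      then show ?thesis using t(2) by simp
    qed
    have SA: "Sg (yA A) \<subseteq> A"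
    proof
      fix z assume "z \<in> Sg (yA A)"
      then obtain t' where t': "t' < length ps" "ys!t' = yA A" "z = snd (ps!t')"
        by (auto simp: Sg_def)
      have okx: "okp g m (ps @ [(A,x)])" using p pAx by simp
      have "ysOf g (ps @ [(A,x)]) ! t' = ysOf g (ps @ [(A,x)]) ! length ps"
        using t' by (simp add: ysOf_snoc nth_append ys_def yA_def)
      then have "snd ((ps @ [(A,x)]) ! t') \<in> fst ((ps @ [(A,x)]) ! length ps)"
        using okx t'(1) unfolding okp_def by auto
      then show "z \<in> A" using t' by (simp add: nth_append)
    qed
    show "p \<in> O1 \<union> O2"
    proof (cases "card (Sg (yA A)) < d")
      case True
      then show ?thesis using AQ xS pAx unfolding O1_def by auto
    next
      case False
      then have "yA A \<in> Y" using yin by (auto simp: Y_def)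
      then show ?thesis using AQ SA xS pAx unfolding O2_def by blast
    qed
  qed
  have finO1: "finite O1" unfolding O1_def using finite_QQ finSg by (intro finite_SigmaI) auto
  have cO1: "card O1 \<le> card (QQ k h) * d"
  proof -
    have "card O1 = (\<Sum>A\<in>QQ k h. card (if card (Sg (yA A)) < d then Sg (yA A) else {}))"
      unfolding O1_def using finite_QQ finSg by (subst card_SigmaI) auto
    also have "\<dots> \<le> (\<Sum>A\<in>QQ k h. d)" by (intro sum_mono) auto
    finally show ?thesis by simp
  qed
  have finY: "finite Y" unfolding Y_def by auto
  have cY: "card Y \<le> m"
  proof -
    have "card Y \<le> card (set ys)" unfolding Y_def by (intro card_mono) auto
    also have "\<dots> \<le> m" using ok by (simp add: okp_def ys_def)
    finally show ?thesis .
  qed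
  have cSig: "real (card (Sigma {A \<in> QQ k h. Sg y \<subseteq> A} (\<lambda>A. A))) \<le> real (card (QQ k h)) / 2^d * real h"
    if yY: "y \<in> Y" for y
  proof -
    have fin1: "finite {A \<in> QQ k h. Sg y \<subseteq> A}" using finite_QQ by auto
    have "card (Sigma {A \<in> QQ k h. Sg y \<subseteq> A} (\<lambda>A. A)) = (\<Sum>A\<in>{A \<in> QQ k h. Sg y \<subseteq> A}. card A)"
      using fin1 by (subst card_SigmaI) (auto simp: QQ_def intro: finite_subset)
    also have "\<dots> = card {A \<in> QQ k h. Sg y \<subseteq> A} * h" by (simp add: QQ_def)
    finally have e: "card (Sigma {A \<in> QQ k h. Sg y \<subseteq> A} (\<lambda>A. A)) = card {A \<in> QQ k h. Sg y \<subseteq> A} * h" .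
    have "card {A \<in> QQ k h. Sg y \<subseteq> A} * 2^card (Sg y) \<le> card (QQ k h)"
      using card_supsets[OF Sg_sub hk, of y] by (simp add: QQ_def conj_assoc)
    moreover have "(2::nat)^d \<le> 2^card (Sg y)" using yY by (auto simp: Y_def)
    ultimately have "card {A \<in> QQ k h. Sg y \<subseteq> A} * 2^d \<le> card (QQ k h)"
      by (meson le_trans mult_le_mono2)
    then have "real (card {A \<in> QQ k h. Sg y \<subseteq> A} * 2^d) \<le> real (card (QQ k h))"
      by (simp only: of_nat_le_iff)
    then have "real (card {A \<in> QQ k h. Sg y \<subseteq> A}) * 2^d \<le> real (card (QQ k h))"
      by simp
    then have "real (card {A \<in> QQ k h. Sg y \<subseteq> A}) \<le> real (card (QQ k h)) / 2^d"
      by (simp add: field_simps)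
    then have "real (card {A \<in> QQ k h. Sg y \<subseteq> A}) * real h \<le> real (card (QQ k h)) / 2^d * real h"
      by (rule mult_right_mono) simp
    then show ?thesis unfolding e by simp
  qed
  have cO2: "real (card O2) \<le> real m * (real (card (QQ k h)) / 2^d * real h)"
  proof -
    have "card O2 \<le> (\<Sum>y\<in>Y. card (Sigma {A \<in> QQ k h. Sg y \<subseteq> A} (\<lambda>A. A)))"
      unfolding O2_def using finY by (rule card_UN_le)
    then have "real (card O2) \<le> (\<Sum>y\<in>Y. real (card (Sigma {A \<in> QQ k h. Sg y \<subseteq> A} (\<lambda>A. A))))"
      by (simp only: of_nat_sum[symmetric] of_nat_le_iff)
    also have "\<dots> \<le> (\<Sum>y\<in>Y. real (card (QQ k h)) / 2^d * real h)"
      by (intro sum_mono cSig)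
    also have "\<dots> = real (card Y) * (real (card (QQ k h)) / 2^d * real h)" by simp
    also have "\<dots> \<le> real m * (real (card (QQ k h)) / 2^d * real h)"
      using cY by (intro mult_right_mono) auto
    finally show ?thesis .
  qed
  have finO2: "finite O2" unfolding O2_def using finY finite_QQ
    by (intro finite_UN_I finite_SigmaI) (auto simp: QQ_def intro: finite_subset)
  have "card {p \<in> PP k h. okp g m (ps@[p]) \<and> Phi g (ps@[p]) = Phi g ps} \<le> card (O1 \<union> O2)"
    using sub finO1 finO2 by (intro card_mono) auto
  also have "\<dots> \<le> card O1 + card O2" by (rule card_Un_le)
  finally have "real (card {p \<in> PP k h. okp g m (ps@[p]) \<and> Phi g (ps@[p]) = Phi g ps})
       \<le> real (card O1) + real (card O2)" by linarith
  also have "\<dots> \<le> real (card (QQ k h) * d) + real m * (real (card (QQ k h)) / 2^d * real h)"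
    using cO1 cO2 by linarith
  also have "\<dots> = real (card (QQ k h)) * (real d + real m * real h / 2^d)"
    by (simp add: field_simps)
  finally show ?thesis .
qed




lemma count_good:
  fixes a W :: real
  assumes apos: "0 < a" and aW: "a \<le> W" and W: "W = real (card (PP k h))"
    and aO: "real (card (QQ k h)) * (real d + real m * real h / 2^d) \<le> a"
    and hk: "2*h \<le> k"
  shows "okp g m ps \<Longrightarrow> set ps \<subseteq> PP k h \<Longrightarrow>
    real (card {qs. length qs = L \<and> set qs \<subseteq> PP k h \<and> okp g m (ps@qs)})
      \<le> (2*a)^L * (W/a)^(m*k - Phi g ps)"
proof (induction L arbitrary: ps)
  case 0
  have "{qs. length qs = 0 \<and> set qs \<subseteq> PP k h \<and> okp g m (ps@qs)} \<subseteq> {[]}" by auto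
  then have "card {qs. length qs = 0 \<and> set qs \<subseteq> PP k h \<and> okp g m (ps@qs)} \<le> card {[]::(nat set \<times> nat) list}"
    by (intro card_mono) auto
  then have c: "real (card {qs. length qs = 0 \<and> set qs \<subseteq> PP k h \<and> okp g m (ps@qs)}) \<le> 1" by simp
  have "1 \<le> W/a" using aW apos by (simp add: field_simps)
  then have "1 \<le> (W/a)^(m*k - Phi g ps)" by (rule one_le_power)
  then show ?case using c by simp
next
  case (Suc L)
  define P' where "P' = {p \<in> PP k h. okp g m (ps@[p])}"
  define Sx where "Sx p = {qs. length qs = L \<and> set qs \<subseteq> PP k h \<and> okp g m ((ps@[p])@qs)}" for p
  define F where "F r = (2*a)^L * (W/a)^(m*k - r)" for r
  define r where "r = Phi g ps"
  define PN where "PN = {p \<in> P'. Phi g (ps@[p]) \<noteq> r}"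
  define PO where "PO = {p \<in> P'. Phi g (ps@[p]) = r}"
  have Fnn: "0 \<le> F r'" for r' unfolding F_def using apos aW by simp
  have sub: "{qs. length qs = Suc L \<and> set qs \<subseteq> PP k h \<and> okp g m (ps@qs)} \<subseteq> (\<Union>p\<in>P'. (#) p ` Sx p)"
  proof
    fix qs assume qs: "qs \<in> {qs. length qs = Suc L \<and> set qs \<subseteq> PP k h \<and> okp g m (ps@qs)}"
    then obtain p qs' where e: "qs = p # qs'" by (cases qs) auto
    have ok: "okp g m ((ps@[p])@qs')" using qs e by simp
    then have "okp g m (ps@[p])" by (rule okp_prefix)
    then have "p \<in> P'" using qs e by (simp add: P'_def)
    moreover have "qs' \<in> Sx p" using qs e ok by (simp add: Sx_def)
    ultimately show "qs \<in> (\<Union>p\<in>P'. (#) p ` Sx p)" using e by blast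
  qed
  have finP': "finite P'" unfolding P'_def using finite_PP by auto
  have finSx: "finite (Sx p)" for p
    by (rule finite_subset[OF _ finite_lists_length_eq[OF finite_PP, of k h L]]) (auto simp: Sx_def)
  have "card {qs. length qs = Suc L \<and> set qs \<subseteq> PP k h \<and> okp g m (ps@qs)} \<le> card (\<Union>p\<in>P'. (#) p ` Sx p)"
    using sub finP' finSx by (intro card_mono) auto
  also have "\<dots> \<le> (\<Sum>p\<in>P'. card ((#) p ` Sx p))" using finP' by (rule card_UN_le)
  also have "\<dots> \<le> (\<Sum>p\<in>P'. card (Sx p))" by (intro sum_mono card_image_le finSx)
  finally have c1: "real (card {qs. length qs = Suc L \<and> set qs \<subseteq> PP k h \<and> okp g m (ps@qs)})
      \<le> (\<Sum>p\<in>P'. real (card (Sx p)))"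
    by (simp only: of_nat_sum[symmetric] of_nat_le_iff)
  have IHp: "real (card (Sx p)) \<le> F (Phi g (ps@[p]))" if "p \<in> P'" for p
  proof -
    have "okp g m (ps@[p])" "set (ps@[p]) \<subseteq> PP k h" using that Suc.prems by (auto simp: P'_def)
    from Suc.IH[OF this] show ?thesis by (simp add: Sx_def F_def)
  qed
  have split: "(\<Sum>p\<in>P'. real (card (Sx p))) = (\<Sum>p\<in>PN. real (card (Sx p))) + (\<Sum>p\<in>PO. real (card (Sx p)))"
  proof -
    have "P' = PN \<union> PO" "PN \<inter> PO = {}" by (auto simp: PN_def PO_def)
    moreover have "finite PN" "finite PO" using finP' by (auto simp: PN_def PO_def)
    ultimately show ?thesis by (simp add: sum.union_disjoint)
  qed
  have sO: "(\<Sum>p\<in>PO. real (card (Sx p))) \<le> a * F r"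
  proof -
    have "(\<Sum>p\<in>PO. real (card (Sx p))) \<le> (\<Sum>p\<in>PO. F r)"
    proof (rule sum_mono)
      fix p assume p: "p \<in> PO"
      then have "p \<in> P'" by (simp add: PO_def)
      from IHp[OF this] show "real (card (Sx p)) \<le> F r" using p by (simp add: PO_def)
    qed
    also have "\<dots> = real (card PO) * F r" by simp
    also have "\<dots> \<le> a * F r"
    proof (rule mult_right_mono[OF _ Fnn])
      have "PO = {p \<in> PP k h. okp g m (ps@[p]) \<and> Phi g (ps@[p]) = Phi g ps}"
        by (auto simp: PO_def P'_def r_def)
      then show "real (card PO) \<le> a"
        using classO[OF Suc.prems hk, of d] aO by simp
    qed
    finally show ?thesis .
  qed
  have sN: "(\<Sum>p\<in>PN. real (card (Sx p))) \<le> a * F r"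
  proof (cases "PN = {}")
    case True then show ?thesis using Fnn apos by simp
  next
    case False
    then obtain p0 where p0: "p0 \<in> PN" by blast
    have PNS: "Phi g (ps@[p]) = Suc r" if "p \<in> PN" for p
      using that Phi_snoc[of g ps p] by (auto simp: PN_def r_def split: if_splits)
    have "Phi g (ps@[p0]) \<le> m*k"
      using p0 Suc.prems by (intro Phi_le[of g m _ k h]) (auto simp: PN_def P'_def)
    then have rle: "Suc r \<le> m*k" using PNS[OF p0] by simp
    have "(\<Sum>p\<in>PN. real (card (Sx p))) \<le> (\<Sum>p\<in>PN. F (Suc r))"
    proof (rule sum_mono)
      fix p assume p: "p \<in> PN"
      then have "p \<in> P'" by (simp add: PN_def)
      from IHp[OF this] show "real (card (Sx p)) \<le> F (Suc r)" using PNS[OF p] by simp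
    qed
    also have "\<dots> = real (card PN) * F (Suc r)" by simp
    also have "\<dots> \<le> W * F (Suc r)"
    proof (rule mult_right_mono[OF _ Fnn])
      have "PN \<subseteq> PP k h" by (auto simp: PN_def P'_def)
      then have "card PN \<le> card (PP k h)" by (rule card_mono[OF finite_PP])
      then show "real (card PN) \<le> W" using W by simp
    qed
    also have "\<dots> = a * F r"
    proof -
      have "m*k - r = Suc (m*k - Suc r)" using rle by simp
      then have e1: "(W/a)^(m*k - r) = (W/a) * (W/a)^(m*k - Suc r)" by simp
      have e2: "a * (W/a) = W" using apos by simp
      have "a * F r = (2*a)^L * (a * (W/a)) * (W/a)^(m*k - Suc r)"
        unfolding F_def e1 by (simp only: ac_simps)
      also have "\<dots> = W * F (Suc r)" unfolding e2 F_def by (simp only: ac_simps)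
      finally show ?thesis by simp
    qed
    finally show ?thesis .
  qed
  have "real (card {qs. length qs = Suc L \<and> set qs \<subseteq> PP k h \<and> okp g m (ps@qs)}) \<le> 2 * a * F r"
    using c1 split sO sN by linarith
  then show ?case by (simp add: F_def r_def)
qed




lemma card_PP: "card (PP k h) = card (QQ k h) * h"
proof -
  have "PP k h = Sigma (QQ k h) (\<lambda>A. A)" by (auto simp: PP_def QQ_def)
  moreover have "card (Sigma (QQ k h) (\<lambda>A. A)) = (\<Sum>A\<in>QQ k h. card A)"
    using finite_QQ by (subst card_SigmaI) (auto simp: QQ_def intro: finite_subset)
  moreover have "(\<Sum>A\<in>QQ k h. card A) = card (QQ k h) * h" by (simp add: QQ_def)
  ultimately show ?thesis by simp
qed

lemma QQ_pos: "h \<le> k \<Longrightarrow> card (QQ k h) > 0"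
proof -
  assume "h \<le> k"
  then have "{1..h} \<in> QQ k h" by (auto simp: QQ_def)
  then show ?thesis using finite_QQ card_gt_0_iff by blast
qed

lemma run_eq: "length ps = n \<Longrightarrow>
  hsgg_run ALG \<phi> k n (map fst ps) (map snd ps) = ysOf (ALG \<phi> k n) ps"
  by (simp add: hsgg_run_def ysOf_def take_map)

lemma input_of:
  assumes "set ps \<subseteq> PP k (k div 2)" "length ps = n" "even k" "k \<le> n"
  shows "hsgg_input k n (map fst ps) (map snd ps)"
  unfolding hsgg_input_def
proof (intro conjI allI impI)
  fix i assume i: "i < n"
  then have "ps ! i \<in> PP k (k div 2)" using assms nth_mem by blast
  then show "map fst ps ! i \<subseteq> {1..k}" "card (map fst ps ! i) = k div 2" "map snd ps ! i \<in> map fst ps ! i"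
    using i assms(2) by (auto simp: PP_def split: prod.splits)
qed (use assms in auto)

lemma okp_of:
  assumes "length ps = n" "hsgg_valid_output n (map fst ps) (map snd ps) (ysOf g ps)"
    "card (set (ysOf g ps)) \<le> m"
  shows "okp g m ps"
  using assms unfolding okp_def hsgg_valid_output_def by auto




lemma core:
  fixes ALG :: hsgg_alg and adv :: hsgg_oracle and k n c m :: nat
  assumes k2: "2 \<le> k" and ev: "even k" and nk: "n = k^c" and c1: "1 \<le> c"
    and HH: "\<forall>As xs. hsgg_input k n As xs \<longrightarrow>
        hsgg_valid_output n As xs (hsgg_run ALG (adv k n As xs) k n As xs) \<and>
        hsgg_cost (hsgg_run ALG (adv k n As xs) k n As xs) \<le> m"
    and NEG: "\<forall>As xs. hsgg_input k n As xs \<longrightarrow>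
        (\<exists>b. hsgg_determined_by ALG (adv k n As xs) b k n As xs \<and>
             real b < 1 / (16 * real c) * real n * ln (real n))"
    and Hm: "real m * real k \<le> real n / 2"
    and Hlog: "(real c + 1) * (log 2 (real k) + 1) + 1 \<le> sqrt (real k) / 2"
    and Hln: "11 \<le> ln (real k)"
  shows False
proof -
  define h where "h = k div 2"
  have hk: "2*h = k" using ev by (simp add: h_def)
  have rh: "real h = real k / 2" using hk by linarith
  obtain D where D: "2^D \<le> k" "k < 2^(D+1)" using ex_power_ivl1[of 2 k] k2 by auto
  have rD: "real D \<le> log 2 (real k)"
  proof -
    have "2 powr real D \<le> real k" using D(1)
      by (metis of_nat_le_iff of_nat_numeral of_nat_power powr_realpow zero_less_numeral)
    then show ?thesis using k2 by (subst le_log_iff) auto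
  qed
  define d where "d = (c+1)*(D+1)"
  have d1: "1 \<le> d" by (simp add: d_def)
  have rd: "real d + 1 \<le> sqrt (real k) / 2"
  proof -
    have "real d = (real c + 1) * (real D + 1)" by (simp add: d_def algebra_simps)
    also have "\<dots> \<le> (real c + 1) * (log 2 (real k) + 1)" using rD by (intro mult_left_mono) auto
    finally show ?thesis using Hlog by linarith
  qed
  have kd: "k^(c+1) < 2^d"
  proof -
    have "k^(c+1) < (2^(D+1))^(c+1)" using D(2) by (intro power_strict_mono) auto
    also have "\<dots> = 2^((D+1)*(c+1))" by (rule power_mult[symmetric])
    also have "\<dots> = 2^d" by (simp only: d_def mult.commute)
    finally show ?thesis .
  qed
  have mn: "m \<le> n"
  proof -
    have "real m * 2 \<le> real m * real k" using k2 by (intro mult_left_mono) auto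
    then have "real m \<le> real n" using Hm by linarith
    then show ?thesis by simp
  qed
  have mh: "m * h \<le> 2^d"
  proof -
    have "m * h \<le> n * k" using mn hk by (intro mult_le_mono) auto
    also have "\<dots> = k^(c+1)" using nk by (simp add: mult.commute)
    finally show ?thesis using kd by linarith
  qed
  define q0 where "q0 = real (card (QQ k h))"
  have q0p: "0 < q0" unfolding q0_def using QQ_pos[of h k] hk by simp
  define a where "a = q0 * (real d + real m * real h / 2^d)"
  define W where "W = real (card (PP k h))"
  have W': "W = q0 * real h" by (simp add: W_def q0_def card_PP)
  have mh1: "real m * real h / 2^d \<le> 1"
  proof -
    have "real (m*h) \<le> real ((2::nat)^d)" using mh by (simp only: of_nat_le_iff)
    then show ?thesis by simp
  qed
  have apos: "0 < a" unfolding a_def using q0p d1 by (intro mult_pos_pos) (auto intro: add_pos_nonneg)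
  have aup: "a \<le> q0 * (real d + 1)" unfolding a_def using q0p mh1 by (intro mult_left_mono) auto
  have sk1: "1 \<le> sqrt (real k)" using k2 by simp
  have skk: "sqrt (real k) * sqrt (real k) = real k" by simp
  have saW: "sqrt (real k) * a \<le> W"
  proof -
    have "sqrt (real k) * a \<le> sqrt (real k) * (q0 * (real d + 1))" using aup by (intro mult_left_mono) auto
    also have "\<dots> \<le> sqrt (real k) * (q0 * (sqrt (real k) / 2))"
      using rd q0p by (intro mult_left_mono) auto
    also have "\<dots> = q0 * (sqrt (real k) * sqrt (real k)) / 2" by (simp only: mult_ac times_divide_eq_right)
    also have "\<dots> = q0 * real h" unfolding skk rh by simp
    finally show ?thesis using W' by simp
  qed
  have "1 * a \<le> sqrt (real k) * a" using sk1 apos by (intro mult_right_mono) auto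
  then have aW: "a \<le> W" using saW by linarith
  define q where "q = W / a"
  have sq: "sqrt (real k) \<le> q" unfolding q_def using saW apos by (simp add: pos_le_divide_eq)
  have q1: "1 \<le> q" using sq sk1 by linarith
  have aO: "real (card (QQ k h)) * (real d + real m * real h / 2^d) \<le> a" by (simp add: a_def q0_def)
  define B where "B = nat \<lceil>1 / (16 * real c) * real n * ln (real n)\<rceil>"
  define T where "T = (\<lambda>S j. j \<in> S) ` Pow {..<B}"
  have finT: "finite T" unfolding T_def by simp
  have cT: "card T \<le> 2^B" unfolding T_def
    using card_image_le[of "Pow {..<B}" "\<lambda>S j. j \<in> S"] by (simp add: card_Pow)
  have kn: "k \<le> n" using nk c1 k2 by (simp add: self_le_power)
  define V where "V = {ps. set ps \<subseteq> PP k h \<and> length ps = n}"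
  define G where "G \<tau> = {qs. length qs = n \<and> set qs \<subseteq> PP k h \<and> okp (ALG \<tau> k n) m ([] @ qs)}" for \<tau>
  have cover: "V \<subseteq> (\<Union>\<tau>\<in>T. G \<tau>)"
  proof
    fix ps assume ps: "ps \<in> V"
    define As where "As = map fst ps"
    define xs where "xs = map snd ps"
    have inp: "hsgg_input k n As xs" using input_of[of ps k n] ps ev kn by (simp add: V_def As_def xs_def h_def)
    then obtain b where b: "hsgg_determined_by ALG (adv k n As xs) b k n As xs"
      "real b < 1 / (16 * real c) * real n * ln (real n)" using NEG by blast
    define S where "S = {j. j < b \<and> adv k n As xs j}"
    define \<tau> where "\<tau> = (\<lambda>j. j \<in> S)"
    have bB: "b \<le> B" using b(2) unfolding B_def by linarith
    have "S \<in> Pow {..<B}" using bB by (auto simp: S_def)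
    then have tT: "\<tau> \<in> T" by (simp add: T_def \<tau>_def)
    have "\<forall>j<b. \<tau> j = adv k n As xs j" by (simp add: \<tau>_def S_def)
    then have req: "hsgg_run ALG \<tau> k n As xs = hsgg_run ALG (adv k n As xs) k n As xs"
      using b(1) unfolding hsgg_determined_by_def by blast
    have ln: "length ps = n" using ps by (simp add: V_def)
    have r2: "hsgg_run ALG \<tau> k n As xs = ysOf (ALG \<tau> k n) ps"
      using run_eq[OF ln] by (simp add: As_def xs_def)
    have "hsgg_valid_output n As xs (hsgg_run ALG (adv k n As xs) k n As xs) \<and>
        hsgg_cost (hsgg_run ALG (adv k n As xs) k n As xs) \<le> m" using HH inp by blast
    then have "hsgg_valid_output n As xs (ysOf (ALG \<tau> k n) ps) \<and> card (set (ysOf (ALG \<tau> k n) ps)) \<le> m"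
      using req r2 by (simp add: hsgg_cost_def)
    then have "okp (ALG \<tau> k n) m ps"
      using okp_of[OF ln, of "ALG \<tau> k n" m] by (simp add: As_def xs_def)
    then have "ps \<in> G \<tau>" using ps by (simp add: G_def V_def)
    then show "ps \<in> (\<Union>\<tau>\<in>T. G \<tau>)" using tT by blast
  qed
  have cG: "real (card (G \<tau>)) \<le> (2*a)^n * q^(m*k)" for \<tau>
    using count_good[OF apos aW W_def aO hk[THEN eq_imp_le, unfolded mult.commute[of 2 h], folded mult.commute[of 2 h]], of "ALG \<tau> k n" "[]" n]
    by (simp add: G_def q_def)
  have finG: "finite (G \<tau>)" for \<tau>
    by (rule finite_subset[OF _ finite_lists_length_eq[OF finite_PP, of k h n]]) (auto simp: G_def)
  have cV: "card V = card (PP k h) ^ n"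
    unfolding V_def by (rule card_lists_length_eq[OF finite_PP])
  have "card V \<le> card (\<Union>\<tau>\<in>T. G \<tau>)"
    using cover finT finG by (intro card_mono) auto
  also have "\<dots> \<le> (\<Sum>\<tau>\<in>T. card (G \<tau>))" using finT by (rule card_UN_le)
  finally have "real (card V) \<le> (\<Sum>\<tau>\<in>T. real (card (G \<tau>)))"
    by (simp only: of_nat_sum[symmetric] of_nat_le_iff)
  also have "\<dots> \<le> (\<Sum>\<tau>\<in>T. (2*a)^n * q^(m*k))" by (intro sum_mono cG)
  also have "\<dots> = real (card T) * ((2*a)^n * q^(m*k))" by simp
  also have "\<dots> \<le> 2^B * ((2*a)^n * q^(m*k))"
  proof (rule mult_right_mono)
    show "real (card T) \<le> 2^B" using cT
      by (metis of_nat_le_iff of_nat_numeral of_nat_power)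
    show "0 \<le> (2*a)^n * q^(m*k)" using apos q1 by simp
  qed
  finally have ineq: "W^n \<le> 2^B * ((2*a)^n * q^(m*k))" using cV W_def by simp
  have Waq: "W = a * q" unfolding q_def using apos by simp
  have mkn: "m*k \<le> n"
  proof -
    have "real (m*k) \<le> real n" using Hm by simp
    then show ?thesis by (simp only: of_nat_le_iff)
  qed
  have qsplit: "q^n = q^(m*k) * q^(n - m*k)" using mkn by (simp add: power_add[symmetric])
  have "a^n * q^(m*k) * q^(n - m*k) \<le> a^n * q^(m*k) * 2^(B+n)"
  proof -
    have E1: "W^n = a^n * q^(m*k) * q^(n - m*k)" unfolding Waq power_mult_distrib qsplit by (simp only: mult_ac)
    have E2: "2^B * ((2*a)^n * q^(m*k)) = a^n * q^(m*k) * 2^(B+n)"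
      unfolding power_mult_distrib power_add by (simp add: mult_ac)
    from ineq show ?thesis unfolding E1 E2 .
  qed
  moreover have "0 < a^n * q^(m*k)" using apos q1 by simp
  ultimately have qB: "q^(n - m*k) \<le> 2^(B+n)" by (simp add: mult_le_cancel_left_pos)
  have sqpos: "0 < sqrt (real k)" using k2 by simp
  have "sqrt (real k)^(n - m*k) \<le> q^(n - m*k)" using sq sqpos by (intro power_mono) auto
  with qB have "sqrt (real k)^(n - m*k) \<le> 2^(B+n)" by linarith
  then have "ln (sqrt (real k)^(n - m*k)) \<le> ln (2^(B+n))"
    using sqpos by (subst ln_le_cancel_iff) auto
  then have L1: "real (n - m*k) * (ln (real k) / 2) \<le> real (B+n) * ln 2"
    using sqpos k2 by (simp add: ln_realpow ln_sqrt)
  define L where "L = ln (real k)"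
  have L0: "0 \<le> L" using Hln by (simp add: L_def)
  have nmk: "real n / 2 \<le> real (n - m*k)" using Hm mkn by (simp add: of_nat_diff)
  have L2: "real n / 2 * (L / 2) \<le> real (n - m*k) * (L / 2)"
    using nmk L0 by (intro mult_right_mono) auto
  have L3: "real (B+n) * ln 2 \<le> real (B+n)"
    using ln_2_less_1 by (intro mult_left_le) auto
  have lnn: "ln (real n) = real c * L" using nk k2 by (simp add: L_def ln_realpow)
  have Bx: "real B \<le> 1 / (16 * real c) * real n * ln (real n) + 1"
  proof -
    define x where "x = 1 / (16 * real c) * real n * ln (real n)"
    have "0 \<le> ln (real n)" using kn k2 by simp
    then have x0: "0 \<le> x" unfolding x_def by simp
    then have "0 \<le> \<lceil>x\<rceil>" by simp
    then have "real B = of_int \<lceil>x\<rceil>" unfolding B_def x_def[symmetric] by simp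
    also have "\<dots> \<le> x + 1" by (rule of_int_ceiling_le_add_one)
    finally show ?thesis unfolding x_def .
  qed
  have cpos: "0 < real c" using c1 by simp
  have Bx2: "1 / (16 * real c) * real n * ln (real n) = real n * L / 16"
    using cpos unfolding lnn by (simp add: field_simps)
  have n2: "2 \<le> real n" using kn k2 by simp
  have nL: "11 * real n \<le> real n * L" using Hln n2 by (simp add: L_def)
  have L1': "real (n - m*k) * (L / 2) \<le> real (B+n) * ln 2" using L1 by (simp add: L_def)
  have Bn: "real (B+n) = real B + real n" by simp
  have "real n * L / 4 \<le> real n * L / 16 + 1 + real n"
    using L1' L2 L3 Bx Bx2 Bn by linarith
  then show False using nL n2 by linarith
qed



lemma asy1: "eventually (\<lambda>x::real. (real c + 1) * (log 2 x + 1) + 1 \<le> sqrt x / 2) at_top"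
  by real_asymp

lemma asy2: "eventually (\<lambda>x::real. 11 \<le> ln x) at_top" by real_asymp

theorem theorem14:
  fixes c :: nat and \<delta> :: real and ALG :: hsgg_alg and adv :: hsgg_oracle
  assumes "c \<ge> 1"
    and "\<delta> > 1 / real c"
    and "\<exists>C N. \<forall>k n As xs. n = k ^ c \<and> n \<ge> N \<and> hsgg_input k n As xs \<longrightarrow>
            hsgg_valid_output n As xs (hsgg_run ALG (adv k n As xs) k n As xs) \<and>
            real (hsgg_cost (hsgg_run ALG (adv k n As xs) k n As xs)) \<le> C * real n powr (1 - \<delta>)"
  shows "\<exists>\<epsilon>>0. \<exists>N. \<forall>k n. even k \<and> n = k ^ c \<and> n \<ge> N \<longrightarrow>
            (\<exists>As xs. hsgg_input k n As xs \<and>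
               (\<forall>b. hsgg_determined_by ALG (adv k n As xs) b k n As xs \<longrightarrow>
                    real b \<ge> \<epsilon> * real n * ln (real n)))"
proof -
  obtain C N0 where H: "\<forall>k n As xs. n = k ^ c \<and> n \<ge> N0 \<and> hsgg_input k n As xs \<longrightarrow>
            hsgg_valid_output n As xs (hsgg_run ALG (adv k n As xs) k n As xs) \<and>
            real (hsgg_cost (hsgg_run ALG (adv k n As xs) k n As xs)) \<le> C * real n powr (1 - \<delta>)"
    using assms(3) by blast
  have cpos: "0 < real c" using assms(1) by simp
  define e where "e = real c * \<delta> - 1"
  have "1 < \<delta> * real c" using assms(2) pos_divide_less_eq[OF cpos, of 1 \<delta>] by simp
  then have e0: "0 < e" by (simp add: e_def mult.commute)
  define C' where "C' = max 0 C + 1"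
  have C'0: "0 < C'" by (simp add: C'_def)
  have E1: "eventually (\<lambda>x::real. C' * x powr (-e) \<le> 1/2) at_top"
  proof -
    have "((\<lambda>x::real. x powr (-e)) \<longlongrightarrow> 0) at_top"
      using e0 by (intro tendsto_neg_powr filterlim_ident) auto
    moreover have "0 < 1 / (2*C')" using C'0 by simp
    ultimately have "eventually (\<lambda>x::real. x powr (-e) < 1 / (2*C')) at_top"
      by (rule order_tendstoD(2))
    then show ?thesis
    proof (rule eventually_mono)
      fix x :: real assume "x powr (-e) < 1 / (2*C')"
      then have "C' * x powr (-e) < C' * (1 / (2*C'))" using C'0 by (rule mult_strict_left_mono)
      then show "C' * x powr (-e) \<le> 1/2" using C'0 by simp
    qed
  qed
  have E2: "eventually (\<lambda>x::real. (real c + 1) * (log 2 x + 1) + 1 \<le> sqrt x / 2) at_top"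
    by (rule asy1)
  have E3: "eventually (\<lambda>x::real. 11 \<le> ln x) at_top" by (rule asy2)
  have E4: "eventually (\<lambda>x::real. 2 \<le> x) at_top" by (rule eventually_ge_at_top)
  have "eventually (\<lambda>x::real. C' * x powr (-e) \<le> 1/2 \<and> (real c + 1) * (log 2 x + 1) + 1 \<le> sqrt x / 2
           \<and> 11 \<le> ln x \<and> 2 \<le> x) at_top"
    using E1 E2 E3 E4 by eventually_elim auto
  then obtain X where X0: "\<forall>x\<ge>X. C' * x powr (-e) \<le> 1/2 \<and> (real c + 1) * (log 2 x + 1) + 1 \<le> sqrt x / 2
           \<and> 11 \<le> ln x \<and> 2 \<le> x"
    unfolding eventually_at_top_linorder by blast
  have X: "C' * x powr (-e) \<le> 1/2 \<and> (real c + 1) * (log 2 x + 1) + 1 \<le> sqrt x / 2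
           \<and> 11 \<le> ln x \<and> 2 \<le> x" if "x \<ge> X" for x
    using X0 that by blast
  define K where "K = nat \<lceil>X\<rceil>"
  define \<epsilon> where "\<epsilon> = 1 / (16 * real c)"
  show ?thesis
  proof (rule exI[of _ \<epsilon>], rule conjI)
    show "0 < \<epsilon>" using cpos by (simp add: \<epsilon>_def)
    show "\<exists>N. \<forall>k n. even k \<and> n = k ^ c \<and> n \<ge> N \<longrightarrow>
            (\<exists>As xs. hsgg_input k n As xs \<and>
               (\<forall>b. hsgg_determined_by ALG (adv k n As xs) b k n As xs \<longrightarrow>
                    real b \<ge> \<epsilon> * real n * ln (real n)))"
    proof (rule exI[of _ "max N0 (K^c)"], intro allI impI)
    fix k n assume kn: "even k \<and> n = k ^ c \<and> max N0 (K^c) \<le> n"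
    have nk: "n = k^c" using kn by blast
    have "max N0 (K^c) \<le> n" using kn by blast
    then have "K^c \<le> n" by (rule le_trans[OF max.cobounded2])
    then have "K^c \<le> k^c" using nk by simp
    then have KK: "K \<le> k" using power_mono_iff[of K k c] assms(1) by simp
    have "real K \<le> real k" using KK by (simp only: of_nat_le_iff)
    then have xX: "X \<le> real k" using real_nat_ceiling_ge[of X] unfolding K_def by linarith
    note Xk = X[OF xX]
    have "2 \<le> real k" using Xk by blast
    then have k2: "2 \<le> k" by linarith
    define m where "m = nat \<lfloor>C * real n powr (1 - \<delta>)\<rfloor>"
    have HH: "\<forall>As xs. hsgg_input k n As xs \<longrightarrow>
        hsgg_valid_output n As xs (hsgg_run ALG (adv k n As xs) k n As xs) \<and>
        hsgg_cost (hsgg_run ALG (adv k n As xs) k n As xs) \<le> m"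
    proof (intro allI impI)
      fix As xs assume "hsgg_input k n As xs"
      then have h: "hsgg_valid_output n As xs (hsgg_run ALG (adv k n As xs) k n As xs) \<and>
            real (hsgg_cost (hsgg_run ALG (adv k n As xs) k n As xs)) \<le> C * real n powr (1 - \<delta>)"
        using H kn by auto
      then show "hsgg_valid_output n As xs (hsgg_run ALG (adv k n As xs) k n As xs) \<and>
        hsgg_cost (hsgg_run ALG (adv k n As xs) k n As xs) \<le> m"
        unfolding m_def using le_nat_floor by blast
    qed
    have Hm: "real m * real k \<le> real n / 2"
    proof -
      have rk: "0 < real k" using k2 by simp
      have "real m \<le> max 0 (C * real n powr (1 - \<delta>))" unfolding m_def by linarith
      also have "\<dots> \<le> C' * real n powr (1 - \<delta>)"
      proof -
        have p0: "0 \<le> real n powr (1 - \<delta>)" by simp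
        have "C * real n powr (1 - \<delta>) \<le> C' * real n powr (1 - \<delta>)"
          unfolding C'_def by (rule mult_right_mono[OF _ p0]) linarith
        moreover have "0 \<le> C' * real n powr (1 - \<delta>)" using C'0 p0 by simp
        ultimately show ?thesis by simp
      qed
      finally have mk1: "real m * real k \<le> C' * real n powr (1 - \<delta>) * real k"
        using rk by (intro mult_right_mono) auto
      have PK: "real n powr (1 - \<delta>) * real k = real k powr (-e) * real n"
      proof -
        have "real n = real k powr real c" using rk nk by (simp add: powr_realpow)
        then have "real n powr (1 - \<delta>) * real k = real k powr (real c * (1 - \<delta>) + 1)"
          using rk by (simp add: powr_powr powr_add)
        also have "real c * (1 - \<delta>) + 1 = -e + real c" by (simp add: e_def algebra_simps)
        also have "real k powr (-e + real c) = real k powr (-e) * real k powr (real c)"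
          by (rule powr_add)
        also have "real k powr (real c) = real n" using rk nk by (simp add: powr_realpow)
        finally show ?thesis .
      qed
      have "real m * real k \<le> C' * (real k powr (-e) * real n)"
        using mk1 unfolding PK[symmetric] by (simp only: mult.assoc)
      also have "\<dots> = (C' * real k powr (-e)) * real n" by (simp add: mult.assoc)
      also have "\<dots> \<le> 1/2 * real n" using Xk by (intro mult_right_mono) auto
      finally show ?thesis by simp
    qed
    show "\<exists>As xs. hsgg_input k n As xs \<and>
               (\<forall>b. hsgg_determined_by ALG (adv k n As xs) b k n As xs \<longrightarrow>
                    \<epsilon> * real n * ln (real n) \<le> real b)"
    proof (rule ccontr)
      assume neg: "\<not> ?thesis"
      have NEG: "\<forall>As xs. hsgg_input k n As xs \<longrightarrow>
        (\<exists>b. hsgg_determined_by ALG (adv k n As xs) b k n As xs \<and>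
             real b < 1 / (16 * real c) * real n * ln (real n))"
        using neg unfolding \<epsilon>_def by (auto simp: not_le)
      have evk: "even k" using kn by blast
      have "(real c + 1) * (log 2 (real k) + 1) + 1 \<le> sqrt (real k) / 2" "11 \<le> ln (real k)"
        using Xk by blast+
      then show False
        using core[of k n c ALG adv m, OF k2 evk nk assms(1) HH NEG Hm] by blast
    qed
    qed
  qed
qed


end
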